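(* Let $\ell\in\{1,\dots,L\}$, assume the asymptotic quadratic-Lipschitz condition on $\mathcal G^{(\ell)}$, and let $A$ be a constant with $\|\mathcal G^{(\ell)}(z)\|_F\le A(1+\|z\|_2^2)$ for all $z$ (such $A$ exists under the condition). Let $Q_1\in\mathcal S^+_{D_\ell}$. Then: (a) $\{Q_0:\|Q_0\|_F<\frac{1}{2A\|Q_1\|_2}\}\subseteq\mathcal D_{\ell,Q_1}$; in particular $\mathbf 0$ lies in the interior of $\mathcal D_{\ell,Q_1}$. (b) For every $Q_0$ in the interior of $\mathcal D_{\ell,Q_1}$ and every sequence $Q_{1,n}\in\mathcal S^+_{D_\ell}$ with $Q_{1,n}\to Q_1$, one has $M_\ell(Q_0\mid Q_{1,n})\to M_\ell(Q_0\mid Q_1)$. (c) For every $Q_0\in\mathcal D_{\ell,Q_1}$ there are $Q_{0,n}$ in the interior of $\mathcal D_{\ell,Q_1}$ with $\lim_{n\to\infty}\log M_\ell(Q_{0,n}\mid Q_1)\le\log M_\ell(Q_0\mid Q_1)$.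
   Context: $\mathcal S^+_D$ denotes the symmetric positive semidefinite $D\times D$ real matrices, $\sqrt Q$ the positive semidefinite square root, $\|\cdot\|_2$ the Euclidean norm (and induced operator norm for matrices), $\|\cdot\|_F$ the Frobenius norm. $\mathcal G^{(\ell)}:\mathbb R^{D_\ell}\to\mathcal S^+_{D_{\ell+1}}$ is a map. Asymptotic quadratic-Lipschitz condition: $\mathcal G^{(\ell)}$ is continuous and for every $\varepsilon>0$ there is $C_\varepsilon>0$ such that for all $z,z'\in\mathbb R^{D_\ell}$, $\|\mathcal G^{(\ell)}(z)-\mathcal G^{(\ell)}(z')\|_F\le C_\varepsilon[1+\|z-z'\|_2(\|z\|_2+\|z'\|_2)]+\varepsilon(\|z\|_2^2+\|z'\|_2^2)$. For $Q_1\in\mathcal S^+_{D_\ell}$ and $Q_0\in\mathbb R^{D_{\ell+1}\times D_{\ell+1}}$ define $M_\ell(Q_0\mid Q_1)=\mathbf E[\exp(\operatorname{tr}(Q_0^\top\mathcal G^{(\ell)}(\sqrt{Q_1}Z)))]\in(0,\infty]$ with $Z\sim\mathcal N(\mathbf 0,\mathbf I_{D_\ell})$, and $\mathcal D_{\ell,Q_1}=\{Q_0\in\mathbb R^{D_{\ell+1}\times D_{\ell+1}}:M_\ell(Q_0\mid Q_1)<\infty\}$. *)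

theory Defs
  imports "HOL-Analysis.Analysis"
begin

definition psd :: "real^'n^'n \<Rightarrow> bool" where
  "psd Q \<longleftrightarrow> transpose Q = Q \<and> (\<forall>x. 0 \<le> x \<bullet> (Q *v x))"

definition psd_sqrt :: "real^'n^'n \<Rightarrow> real^'n^'n" where
  "psd_sqrt Q = (THE S. psd S \<and> S ** S = Q)"

text \<open>Induced operator 2-norm of a matrix. (The library norm on real^'n^'m
  is the Frobenius norm.)\<close>
definition op_norm :: "real^'n^'m \<Rightarrow> real" where
  "op_norm Q = onorm (\<lambda>x. Q *v x)"

definition std_gauss :: "(real^'n) measure" where
  "std_gauss = density lborel
     (\<lambda>z. ennreal ((2 * pi) powr (- real CARD('n) / 2) * exp (- (norm z)\<^sup>2 / 2)))"

definition asym_quad_lipschitz :: "(real^'n \<Rightarrow> real^'m^'m) \<Rightarrow> bool" where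
  "asym_quad_lipschitz G \<longleftrightarrow> continuous_on UNIV G \<and>
     (\<forall>\<epsilon>>0. \<exists>C>0. \<forall>z z'. norm (G z - G z') \<le>
        C * (1 + norm (z - z') * (norm z + norm z')) + \<epsilon> * ((norm z)\<^sup>2 + (norm z')\<^sup>2))"

definition mgfM :: "(real^'n \<Rightarrow> real^'m^'m) \<Rightarrow> real^'m^'m \<Rightarrow> real^'n^'n \<Rightarrow> ennreal" where
  "mgfM G Q0 Q1 = (\<integral>\<^sup>+ z. ennreal (exp (trace (transpose Q0 ** G (psd_sqrt Q1 *v z)))) \<partial>std_gauss)"

definition domD :: "(real^'n \<Rightarrow> real^'m^'m) \<Rightarrow> real^'n^'n \<Rightarrow> (real^'m^'m) set" where
  "domD G Q1 = {Q0. mgfM G Q0 Q1 < \<infinity>}"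

end

theory Submission
  imports Defs "HOL-Computational_Algebra.Formal_Power_Series" "HOL-Probability.Distributions"
begin

definition cf :: "nat \<Rightarrow> real" where "cf k = ((1/2::real) gchoose k) * (-1)^k"

lemma cf_0[simp]: "cf 0 = 1" by (simp add: cf_def)

lemma gb_Suc: "(a::real) gchoose (Suc k) = (a gchoose k) * (a - real k) / real (Suc k)"
  by (simp add: gbinomial_prod_rev field_simps)

lemma cf_Suc: "cf (Suc k) = cf k * (real k - 1/2) / (real k + 1)"
  by (simp add: cf_def gb_Suc field_simps)

lemma cf_1: "cf 1 = -1/2" by (simp add: cf_def)

lemma cf_nonpos: "k \<ge> 1 \<Longrightarrow> cf k \<le> 0"
proof (induction k)
  case 0 then show ?case by simp
next
  case (Suc k)
  show ?case
  proof (cases "k = 0")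
    case True then show ?thesis by (simp add: cf_1[simplified])
  next
    case False
    then have "cf k \<le> 0" "real k \<ge> 1" using Suc by auto
    then show ?thesis unfolding cf_Suc by (simp add: divide_nonpos_pos mult_nonpos_nonneg)
  qed
qed

lemma cf_partial: "(\<Sum>k\<in>{1..N}. \<bar>cf k\<bar>) = 1 - 2 * (real N + 1) * \<bar>cf (Suc N)\<bar>"
proof (induction N)
  case 0 then show ?case by (simp add: cf_1[simplified])
next
  case (Suc N)
  have e: "\<bar>cf (Suc (Suc N))\<bar> = \<bar>cf (Suc N)\<bar> * (real N + 1/2) / (real N + 2)"
  proof -
    have "\<bar>cf (Suc (Suc N))\<bar> = \<bar>cf (Suc N)\<bar> * \<bar>real (Suc N) - 1/2\<bar> / \<bar>real (Suc N) + 1\<bar>"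
      by (subst cf_Suc) (simp only: abs_mult abs_divide)
    moreover have "\<bar>real (Suc N) - 1/2\<bar> = real N + 1/2" "\<bar>real (Suc N) + 1\<bar> = real N + 2" by auto
    ultimately show ?thesis by (simp add: add.commute)
  qed
  have "(\<Sum>k\<in>{1..Suc N}. \<bar>cf k\<bar>) = (\<Sum>k\<in>{1..N}. \<bar>cf k\<bar>) + \<bar>cf (Suc N)\<bar>"
    by simp
  also have "\<dots> = 1 - (2 * real N + 1) * \<bar>cf (Suc N)\<bar>" using Suc by (simp add: algebra_simps)
  also have "\<dots> = 1 - 2 * (real (Suc N) + 1) * \<bar>cf (Suc (Suc N))\<bar>"
    unfolding e by (simp add: field_simps)
  finally show ?case .
qed

lemma cf_partial_le: "(\<Sum>k\<in>{1..N}. \<bar>cf k\<bar>) \<le> 1"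
  unfolding cf_partial by simp

lemma cf_shift_le: "(\<Sum>k<N. \<bar>cf (Suc k)\<bar>) \<le> 1"
proof -
  have "(\<Sum>k<N. \<bar>cf (Suc k)\<bar>) = (\<Sum>k\<in>{1..N}. \<bar>cf k\<bar>)"
    by (rule sum.reindex_bij_witness[where i="\<lambda>k. k - 1" and j=Suc]) auto
  then show ?thesis using cf_partial_le by simp
qed

lemma summable_cf_shift: "summable (\<lambda>k. \<bar>cf (Suc k)\<bar>)"
  using cf_shift_le by (intro summableI_nonneg_bounded[where x=1]) auto

lemma summable_cf: "summable (\<lambda>k. \<bar>cf k\<bar>)"
  using summable_cf_shift by (subst summable_Suc_iff[symmetric])

lemma suminf_cf_shift: "(\<Sum>k. \<bar>cf (Suc k)\<bar>) \<le> 1"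
  using summable_cf_shift cf_shift_le by (intro suminf_le_const) auto

lemma cf_conv: "(\<Sum>i\<le>k. cf i * cf (k - i)) = (if k = 0 then 1 else if k = 1 then -1 else 0)"
proof -
  have "(\<Sum>i\<le>k. cf i * cf (k - i)) = (\<Sum>i\<in>{0..k}. ((1/2::real) gchoose i) * ((1/2) gchoose (k - i))) * (-1)^k"
    unfolding cf_def sum_distrib_right
    by (intro sum.cong) (auto simp: atLeast0AtMost power_add[symmetric])
  also have "\<dots> = ((1::real) gchoose k) * (-1)^k"
    using gbinomial_Vandermonde[of "1/2::real" "1/2" k] by simp
  also have "\<dots> = (if k = 0 then 1 else if k = 1 then -1 else 0)"
    using binomial_gbinomial[of 1 k, where 'a=real] by (auto simp: binomial_eq_0)
  finally show ?thesis .
qed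

lemma norm_sq_rows: "(norm (A::real^'a^'b))^2 = (\<Sum>i\<in>UNIV. (norm (A$i))^2)"
  by (simp add: power2_norm_eq_inner inner_vec_def)

lemma norm_sq_vec: "(norm (x::real^'a))^2 = (\<Sum>i\<in>UNIV. (x$i)^2)"
  unfolding power2_norm_eq_inner inner_vec_def by (simp add: power2_eq_square)

lemma mv_bound: "norm ((B::real^'a^'b) *v x) \<le> norm B * norm x"
proof -
  have "(norm (B *v x))^2 = (\<Sum>i\<in>UNIV. ((B$i) \<bullet> x)^2)"
    by (simp add: norm_sq_vec matrix_vector_mul_component)
  also have "\<dots> \<le> (\<Sum>i\<in>UNIV. (norm (B$i))^2 * (norm x)^2)"
  proof (intro sum_mono)
    fix i
    have "\<bar>(B$i) \<bullet> x\<bar> \<le> norm (B$i) * norm x" by (rule Cauchy_Schwarz_ineq2)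
    then have "\<bar>(B$i) \<bullet> x\<bar>^2 \<le> (norm (B$i) * norm x)^2"
      by (intro power_mono) auto
    then show "((B$i) \<bullet> x)^2 \<le> (norm (B$i))^2 * (norm x)^2" by (simp add: power_mult_distrib)
  qed
  also have "\<dots> = (norm B * norm x)^2"
    by (simp add: norm_sq_rows sum_distrib_right power_mult_distrib)
  finally show ?thesis
    by (rule power2_le_imp_le) simp
qed

lemma norm_transpose: "norm (transpose (B::real^'a^'b)) = norm B"
proof -
  have "(norm (transpose B))^2 = (norm B)^2"
    unfolding norm_sq_rows norm_sq_vec transpose_def by (simp, rule sum.swap)
  then show ?thesis by (simp add: power2_eq_iff_nonneg)
qed

lemma frob_mult: "norm ((A::real^'k^'m) ** (B::real^'n^'k)) \<le> norm A * norm B"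
proof -
  have r: "(A ** B)$i = transpose B *v (A$i)" for i
    by (simp add: matrix_matrix_mult_def vector_matrix_mult_def vec_eq_iff mult.commute)
  have "(norm (A ** B))^2 = (\<Sum>i\<in>UNIV. (norm (transpose B *v (A$i)))^2)"
    by (simp add: norm_sq_rows r)
  also have "\<dots> \<le> (\<Sum>i\<in>UNIV. (norm B)^2 * (norm (A$i))^2)"
  proof (intro sum_mono)
    fix i
    have "norm (transpose B *v (A$i)) \<le> norm B * norm (A$i)"
      using mv_bound[of "transpose B" "A$i"] by (simp add: norm_transpose)
    then show "(norm (transpose B *v (A$i)))^2 \<le> (norm B)^2 * (norm (A$i))^2"
      by (metis norm_ge_zero power_mono power_mult_distrib)
  qed
  also have "\<dots> = (norm A * norm B)^2"
    by (simp add: norm_sq_rows sum_distrib_left power_mult_distrib mult.commute)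
  finally show ?thesis
    by (rule power2_le_imp_le) simp
qed

lemma bb_mm: "bounded_bilinear (\<lambda>(A::real^'k^'m) (B::real^'n^'k). A ** B)"
proof (rule bounded_bilinear.intro)
  show "\<exists>K. \<forall>a b. norm (a ** b) \<le> norm (a::real^'k^'m) * norm (b::real^'n^'k) * K"
    by (rule exI[of _ 1]) (simp add: frob_mult)
next
  fix a a' :: "real^'k^'m" and b :: "real^'n^'k"
  show "(a + a') ** b = a ** b + a' ** b"
    by (simp add: matrix_matrix_mult_def vec_eq_iff sum.distrib distrib_right)
next
  fix a :: "real^'k^'m" and b b' :: "real^'n^'k"
  show "a ** (b + b') = a ** b + a ** b'" by (rule matrix_add_ldistrib)
next
  fix r and a :: "real^'k^'m" and b :: "real^'n^'k"
  show "(r *\<^sub>R a) ** b = r *\<^sub>R (a ** b)" by (simp add: scalar_matrix_assoc)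
  show "a ** (r *\<^sub>R b) = r *\<^sub>R (a ** b)" by (simp add: matrix_scalar_ac scalar_matrix_assoc)
qed

lemma bb_mv: "bounded_bilinear (\<lambda>(A::real^'k^'m) (x::real^'k). A *v x)"
proof (rule bounded_bilinear.intro)
  show "\<exists>K. \<forall>a b. norm (a *v b) \<le> norm (a::real^'k^'m) * norm (b::real^'k) * K"
    by (rule exI[of _ 1]) (simp add: mv_bound)
qed (simp_all add: matrix_vector_mult_add_rdistrib matrix_vector_right_distrib matrix_vector_mult_scaleR
   scaleR_matrix_vector_assoc)

lemma op_bound: "norm ((Q::real^'a^'b) *v x) \<le> op_norm Q * norm x"
  unfolding op_norm_def by (rule onorm[OF matrix_vector_mul_bounded_linear])

lemma op_nonneg: "0 \<le> op_norm (Q::real^'a^'b)"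
  unfolding op_norm_def by (rule onorm_pos_le[OF matrix_vector_mul_bounded_linear])

lemma op_le_frob: "op_norm (Q::real^'a^'b) \<le> norm Q"
  unfolding op_norm_def by (rule onorm_le) (rule mv_bound)

lemma op_le_diff: "op_norm (A::real^'a^'b) \<le> op_norm B + norm (A - B)"
  unfolding op_norm_def
proof (rule onorm_le)
  fix x
  have "norm (A *v x) \<le> norm (B *v x) + norm ((A - B) *v x)"
    by (metis add_diff_cancel_left' matrix_vector_mult_add_rdistrib norm_triangle_ineq
        add.commute diff_add_cancel)
  also have "\<dots> \<le> onorm ((*v) B) * norm x + norm (A - B) * norm x"
    by (intro add_mono mv_bound) (rule onorm[OF matrix_vector_mul_bounded_linear])
  finally show "norm (A *v x) \<le> (onorm ((*v) B) + norm (A - B)) * norm x"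
    by (simp add: distrib_right)
qed

lemma trace_inner: "trace (transpose (Q::real^'m^'m) ** B) = Q \<bullet> B"
  unfolding trace_def matrix_matrix_mult_def transpose_def inner_vec_def
  by (simp, rule sum.swap)

lemma sym_inner: "transpose A = A \<Longrightarrow> x \<bullet> ((A::real^'a^'a) *v y) = (A *v x) \<bullet> y"
  by (metis dot_lmul_matrix transpose_matrix_vector)

primrec mpow :: "real^'n^'n \<Rightarrow> nat \<Rightarrow> real^'n^'n" where
  "mpow X 0 = mat 1"
| "mpow X (Suc k) = X ** mpow X k"

lemma mpow_add: "mpow X (i + j) = mpow X i ** mpow X j"
  by (induction i) (simp_all add: matrix_mul_assoc)

lemma mpow_comm: "A ** X = X ** A \<Longrightarrow> A ** mpow X k = mpow X k ** A"
proof (induction k)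
  case 0 then show ?case by simp
next
  case (Suc k)
  have IH: "A ** mpow X k = mpow X k ** A" using Suc by blast
  have "A ** (X ** mpow X k) = (A ** X) ** mpow X k" by (rule matrix_mul_assoc)
  also have "\<dots> = (X ** A) ** mpow X k" using Suc.prems by simp
  also have "\<dots> = X ** (A ** mpow X k)" by (rule matrix_mul_assoc[symmetric])
  also have "\<dots> = X ** (mpow X k ** A)" by (simp only: IH)
  also have "\<dots> = (X ** mpow X k) ** A" by (rule matrix_mul_assoc)
  finally show ?case by simp
qed

lemma mpow_sym: "transpose X = X \<Longrightarrow> transpose (mpow X k) = mpow X k"
proof (induction k)
  case 0 then show ?case by simp
next
  case (Suc k)
  then show ?case using mpow_comm[of X X k] by (simp add: matrix_transpose_mul)
qed

definition contr :: "real^'n^'n \<Rightarrow> bool" where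
  "contr X \<longleftrightarrow> (\<forall>x. norm (X *v x) \<le> norm x)"

lemma mpow_contr: "contr X \<Longrightarrow> norm (mpow X k *v x) \<le> norm x"
proof (induction k arbitrary: x)
  case 0 then show ?case by simp
next
  case (Suc k)
  have "norm (mpow X (Suc k) *v x) = norm (X *v (mpow X k *v x))"
    by (simp add: matrix_vector_mul_assoc)
  also have "\<dots> \<le> norm (mpow X k *v x)" using Suc unfolding contr_def by blast
  also have "\<dots> \<le> norm x" using Suc by blast
  finally show ?case .
qed

lemma norm_contr_bound:
  assumes "\<And>x. norm ((B::real^'n^'n) *v x) \<le> norm x"
  shows "norm B \<le> real CARD('n)"
proof -
  have col: "(transpose B)$j = B *v axis j 1" for j
    by (simp add: transpose_def matrix_vector_mult_def axis_def vec_eq_iff if_distrib cong: if_cong)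
  have "(norm B)^2 = (norm (transpose B))^2" by (simp add: norm_transpose)
  also have "\<dots> = (\<Sum>j\<in>UNIV. (norm (B *v axis j 1))^2)" by (simp add: norm_sq_rows col)
  also have "\<dots> \<le> (\<Sum>j\<in>(UNIV::'n set). 1)"
  proof (intro sum_mono)
    fix j :: 'n
    have "norm (B *v axis j 1) \<le> 1" using assms[of "axis j 1"] by simp
    then show "(norm (B *v axis j 1))^2 \<le> 1" by (simp add: power_le_one)
  qed
  finally have sq: "(norm B)^2 \<le> real CARD('n)" by simp
  show ?thesis
  proof (cases "norm B \<le> 1")
    case True
    moreover have "1 \<le> real CARD('n)" by simp
    ultimately show ?thesis by linarith
  next
    case False
    then have "norm B * 1 \<le> norm B * norm B" by (intro mult_left_mono) auto
    then have "norm B \<le> (norm B)^2" by (simp add: power2_eq_square)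
    with sq show ?thesis by linarith
  qed
qed

lemma mpow_norm: fixes X :: "real^'n^'n" shows "contr X \<Longrightarrow> norm (mpow X k) \<le> real CARD('n)"
  using norm_contr_bound[of "mpow X k"] mpow_contr by blast

definition FF :: "real^'n^'n \<Rightarrow> real^'n^'n" where
  "FF X = (\<Sum>k. cf k *\<^sub>R mpow X k)"

lemma FF_summable_norm: fixes X :: "real^'n^'n" shows "contr X \<Longrightarrow> summable (\<lambda>k. norm (cf k *\<^sub>R mpow X k))"
proof (rule summable_comparison_test)
  assume c: "contr X"
  show "\<exists>N. \<forall>n\<ge>N. norm (norm (cf n *\<^sub>R mpow X n)) \<le> \<bar>cf n\<bar> * real CARD('n)"
    using mpow_norm[OF c] by (auto intro!: mult_left_mono)
  show "summable (\<lambda>n. \<bar>cf n\<bar> * real CARD('n))"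
    by (intro summable_mult2 summable_cf)
qed

lemma FF_summable: "contr X \<Longrightarrow> summable (\<lambda>k. cf k *\<^sub>R mpow X k)"
  by (rule summable_norm_cancel) (rule FF_summable_norm)

lemma mcauchy:
  fixes a b :: "nat \<Rightarrow> real^'n^'n"
  assumes a: "summable (\<lambda>k. norm (a k))"
    and b: "summable (\<lambda>k. norm (b k))"
  shows "(\<lambda>k. \<Sum>i\<le>k. a i ** b (k - i)) sums ((\<Sum>k. a k) ** (\<Sum>k. b k))"
proof -
  let ?S1 = "\<lambda>n::nat. {..<n} \<times> {..<n}"
  let ?S2 = "\<lambda>n::nat. {(i,j). i + j < n}"
  have S1_mono: "\<And>m n. m \<le> n \<Longrightarrow> ?S1 m \<subseteq> ?S1 n" by auto
  have S2_le_S1: "\<And>n. ?S2 n \<subseteq> ?S1 n" by auto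
  have S1_le_S2: "\<And>n. ?S1 (n div 2) \<subseteq> ?S2 n" by auto
  have finite_S1: "\<And>n. finite (?S1 n)" by simp
  with S2_le_S1 have finite_S2: "\<And>n. finite (?S2 n)" by (rule finite_subset)

  let ?g = "\<lambda>(i,j). a i ** b j"
  let ?f = "\<lambda>(i,j). norm (a i) * norm (b j)"
  have f_nonneg: "\<And>x. 0 \<le> ?f x" by auto
  then have norm_sum_f: "\<And>A. norm (sum ?f A) = sum ?f A"
    unfolding real_norm_def
    by (simp only: abs_of_nonneg sum_nonneg [rule_format])
  have sp: "(\<Sum>k<n. a k) ** (\<Sum>k<n. b k) = sum ?g (?S1 n)" for n
  proof -
    have "(\<Sum>k<n. a k) ** (\<Sum>k<n. b k) = (\<Sum>i<n. \<Sum>j<n. a i ** b j)"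
      by (simp add: bounded_bilinear.sum_left[OF bb_mm] bounded_bilinear.sum_right[OF bb_mm])
         (rule sum.swap)
    also have "\<dots> = sum ?g (?S1 n)" by (simp add: sum.cartesian_product)
    finally show ?thesis .
  qed
  have "(\<lambda>n. (\<Sum>k<n. a k) ** (\<Sum>k<n. b k)) \<longlonglongrightarrow> (\<Sum>k. a k) ** (\<Sum>k. b k)"
    by (intro bounded_bilinear.tendsto[OF bb_mm] summable_LIMSEQ summable_norm_cancel [OF a] summable_norm_cancel [OF b])
  then have 1: "(\<lambda>n. sum ?g (?S1 n)) \<longlonglongrightarrow> (\<Sum>k. a k) ** (\<Sum>k. b k)"
    by (simp only: sp)

  have "(\<lambda>n. (\<Sum>k<n. norm (a k)) * (\<Sum>k<n. norm (b k))) \<longlonglongrightarrow> (\<Sum>k. norm (a k)) * (\<Sum>k. norm (b k))"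
    using a b by (intro tendsto_mult summable_LIMSEQ)
  then have "(\<lambda>n. sum ?f (?S1 n)) \<longlonglongrightarrow> (\<Sum>k. norm (a k)) * (\<Sum>k. norm (b k))"
    by (simp only: sum_product sum.Sigma [rule_format] finite_lessThan)
  then have "convergent (\<lambda>n. sum ?f (?S1 n))"
    by (rule convergentI)
  then have Cauchy: "Cauchy (\<lambda>n. sum ?f (?S1 n))"
    by (rule convergent_Cauchy)
  have "Zfun (\<lambda>n. sum ?f (?S1 n - ?S2 n)) sequentially"
  proof (rule ZfunI, simp only: eventually_sequentially norm_sum_f)
    fix r :: real
    assume r: "0 < r"
    from CauchyD [OF Cauchy r] obtain N
      where "\<forall>m\<ge>N. \<forall>n\<ge>N. norm (sum ?f (?S1 m) - sum ?f (?S1 n)) < r" ..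
    then have "\<And>m n. N \<le> n \<Longrightarrow> n \<le> m \<Longrightarrow> norm (sum ?f (?S1 m - ?S1 n)) < r"
      by (simp only: sum_diff finite_S1 S1_mono)
    then have N: "\<And>m n. N \<le> n \<Longrightarrow> n \<le> m \<Longrightarrow> sum ?f (?S1 m - ?S1 n) < r"
      by (simp only: norm_sum_f)
    show "\<exists>N. \<forall>n\<ge>N. sum ?f (?S1 n - ?S2 n) < r"
    proof (intro exI allI impI)
      fix n
      assume "2 * N \<le> n"
      then have n: "N \<le> n div 2" by simp
      have "sum ?f (?S1 n - ?S2 n) \<le> sum ?f (?S1 n - ?S1 (n div 2))"
        by (intro sum_mono2 finite_Diff finite_S1 f_nonneg Diff_mono subset_refl S1_le_S2)
      also have "\<dots> < r"
        using n div_le_dividend by (rule N)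
      finally show "sum ?f (?S1 n - ?S2 n) < r" .
    qed
  qed
  then have "Zfun (\<lambda>n. sum ?g (?S1 n - ?S2 n)) sequentially"
    apply (rule Zfun_le [rule_format])
    apply (simp only: norm_sum_f)
    apply (rule order_trans [OF norm_sum sum_mono])
    apply (auto simp add: frob_mult)
    done
  then have 2: "(\<lambda>n. sum ?g (?S1 n) - sum ?g (?S2 n)) \<longlonglongrightarrow> 0"
    unfolding tendsto_Zfun_iff diff_0_right
    by (simp only: sum_diff finite_S1 S2_le_S1)
  with 1 have "(\<lambda>n. sum ?g (?S2 n)) \<longlonglongrightarrow> (\<Sum>k. a k) ** (\<Sum>k. b k)"
    by (rule Lim_transform2)
  then show ?thesis
    by (simp only: sums_def sum.triangle_reindex)
qed

lemma FF_sq: fixes X :: "real^'n^'n" assumes c: "contr X" shows "FF X ** FF X = mat 1 - X"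
proof -
  have "(\<lambda>k. \<Sum>i\<le>k. (cf i *\<^sub>R mpow X i) ** (cf (k - i) *\<^sub>R mpow X (k - i))) sums (FF X ** FF X)"
    unfolding FF_def by (intro mcauchy FF_summable_norm c)
  moreover have "(\<Sum>i\<le>k. (cf i *\<^sub>R mpow X i) ** (cf (k - i) *\<^sub>R mpow X (k - i)))
      = (if k = 0 then mat 1 else if k = 1 then - X else 0)" for k
  proof -
    have "(\<Sum>i\<le>k. (cf i *\<^sub>R mpow X i) ** (cf (k - i) *\<^sub>R mpow X (k - i)))
        = (\<Sum>i\<le>k. (cf i * cf (k - i)) *\<^sub>R mpow X k)"
    proof (intro sum.cong refl)
      fix i assume "i \<in> {..k}"
      then have "mpow X i ** mpow X (k - i) = mpow X k" by (simp add: mpow_add[symmetric])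
      then show "(cf i *\<^sub>R mpow X i) ** (cf (k - i) *\<^sub>R mpow X (k - i)) = (cf i * cf (k - i)) *\<^sub>R mpow X k"
        by (simp add: matrix_scalar_ac scalar_matrix_assoc[symmetric])
    qed
    also have "\<dots> = (\<Sum>i\<le>k. cf i * cf (k - i)) *\<^sub>R mpow X k" by (simp add: scaleR_sum_left)
    also have "\<dots> = (if k = 0 then mat 1 else if k = 1 then - X else 0)"
      unfolding cf_conv by (simp add: numeral_2_eq_2)
    finally show ?thesis .
  qed
  ultimately have "(\<lambda>k. if k = 0 then mat 1 else if k = 1 then - X else 0) sums (FF X ** FF X)" by simp
  moreover have "(\<lambda>k. if k = 0 then mat 1 else if k = 1 then - X else (0::real^'n^'n)) sums (mat 1 - X)"
  proof -
    define f where "f = (\<lambda>k::nat. if k = 0 then mat 1 else if k = 1 then - X else (0::real^'n^'n))"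
    have "f sums (sum f {0,1})"
      by (rule sums_finite) (auto simp: f_def)
    then show ?thesis by (simp add: f_def)
  qed
  ultimately show ?thesis using sums_unique2 by blast
qed

lemma bl_transpose: "bounded_linear (transpose :: real^'a^'b \<Rightarrow> real^'b^'a)"
proof (rule bounded_linear_intro[where K=1])
  show "transpose (x + y) = transpose x + transpose y" for x y :: "real^'a^'b"
    by (simp add: transpose_def vec_eq_iff)
  show "transpose (r *\<^sub>R x) = r *\<^sub>R transpose x" for r and x :: "real^'a^'b"
    by (rule transpose_scalar)
  show "norm (transpose x) \<le> norm x * 1" for x :: "real^'a^'b"
    by (simp add: norm_transpose)
qed

lemma FF_sym:
  fixes X :: "real^'n^'n"
  assumes c: "contr X" and s: "transpose X = X"
  shows "transpose (FF X) = FF X"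
proof -
  have "transpose (FF X) = (\<Sum>k. transpose (cf k *\<^sub>R mpow X k))"
    unfolding FF_def by (rule bounded_linear.suminf[OF bl_transpose FF_summable[OF c]])
  also have "\<dots> = FF X"
    unfolding FF_def by (simp add: transpose_scalar mpow_sym[OF s])
  finally show ?thesis .
qed

lemma FF_comm:
  fixes X :: "real^'n^'n"
  assumes c: "contr X" and ax: "A ** X = X ** A"
  shows "A ** FF X = FF X ** A"
proof -
  have "A ** FF X = (\<Sum>k. A ** (cf k *\<^sub>R mpow X k))"
    unfolding FF_def
    by (rule bounded_linear.suminf[OF bounded_bilinear.bounded_linear_right[OF bb_mm] FF_summable[OF c]])
  also have "\<dots> = (\<Sum>k. (cf k *\<^sub>R mpow X k) ** A)"
    by (simp add: matrix_scalar_ac scalar_matrix_assoc[symmetric] mpow_comm[OF ax])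
  also have "\<dots> = FF X ** A"
    unfolding FF_def
    by (rule bounded_linear.suminf[OF bounded_bilinear.bounded_linear_left[OF bb_mm] FF_summable[OF c], symmetric])
  finally show ?thesis .
qed

lemma FF_quad:
  fixes X :: "real^'n^'n"
  assumes c: "contr X"
  shows "0 \<le> x \<bullet> (FF X *v x)"
proof -
  let ?q = "\<lambda>B::real^'n^'n. x \<bullet> (B *v x)"
  have blq: "bounded_linear ?q"
    by (rule bounded_linear_compose[OF bounded_linear_inner_right[of x] bounded_bilinear.bounded_linear_left[OF bb_mv, of x]])
  define f where "f k = cf k * (x \<bullet> (mpow X k *v x))" for k
  have q: "?q (FF X) = (\<Sum>k. f k)"
    unfolding FF_def f_def
    using bounded_linear.suminf[OF blq FF_summable[OF c]]
    by (simp add: matrix_vector_mult_def inner_scaleR_right scaleR_vec_def sum_distrib_left mult_ac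
         inner_vec_def[of x] flip: scaleR_vec_def)
  have fb: "\<bar>x \<bullet> (mpow X k *v x)\<bar> \<le> (norm x)^2" for k
  proof -
    have "\<bar>x \<bullet> (mpow X k *v x)\<bar> \<le> norm x * norm (mpow X k *v x)" by (rule Cauchy_Schwarz_ineq2)
    also have "\<dots> \<le> norm x * norm x" by (intro mult_left_mono mpow_contr c) auto
    finally show ?thesis by (simp add: power2_eq_square)
  qed
  have sf: "summable f"
  proof (rule summable_comparison_test)
    show "\<exists>N. \<forall>n\<ge>N. norm (f n) \<le> \<bar>cf n\<bar> * (norm x)^2"
      using fb by (auto simp: f_def abs_mult intro!: mult_left_mono)
    show "summable (\<lambda>n. \<bar>cf n\<bar> * (norm x)^2)" by (intro summable_mult2 summable_cf)
  qed
  have "(\<Sum>k. f k) = f 0 + (\<Sum>k. f (Suc k))" using suminf_split_head[OF sf] by simp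
  moreover have "f 0 = (norm x)^2" by (simp add: f_def power2_norm_eq_inner)
  moreover have "(\<Sum>k. f (Suc k)) \<ge> (\<Sum>k. - (\<bar>cf (Suc k)\<bar> * (norm x)^2))"
  proof (rule suminf_le)
    show "- (\<bar>cf (Suc k)\<bar> * (norm x)^2) \<le> f (Suc k)" for k
    proof -
      have "\<bar>f (Suc k)\<bar> \<le> \<bar>cf (Suc k)\<bar> * (norm x)^2"
        unfolding f_def abs_mult by (intro mult_left_mono fb) auto
      then show ?thesis by linarith
    qed
    show "summable (\<lambda>k. - (\<bar>cf (Suc k)\<bar> * (norm x)^2))"
      by (intro summable_minus summable_mult2 summable_cf_shift)
    show "summable (\<lambda>k. f (Suc k))" using sf by (simp add: summable_Suc_iff)
  qed
  moreover have "(\<Sum>k. - (\<bar>cf (Suc k)\<bar> * (norm x)^2)) = - ((\<Sum>k. \<bar>cf (Suc k)\<bar>) * (norm x)^2)"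
    using suminf_minus[OF summable_mult2[OF summable_cf_shift, of "(norm x)^2"]]
      suminf_mult2[OF summable_cf_shift, of "(norm x)^2"] by simp
  moreover have "(\<Sum>k. \<bar>cf (Suc k)\<bar>) * (norm x)^2 \<le> 1 * (norm x)^2"
    by (intro mult_right_mono suminf_cf_shift) auto
  ultimately show ?thesis using q by simp
qed

lemma FF_cont: "continuous_on {X::real^'n^'n. contr X} FF"
proof -
  have ul: "uniform_limit {X::real^'n^'n. contr X} (\<lambda>n X. \<Sum>i<n. cf i *\<^sub>R mpow X i) (\<lambda>X. \<Sum>i. cf i *\<^sub>R mpow X i) sequentially"
  proof (rule Weierstrass_m_test)
    show "norm (cf n *\<^sub>R mpow X n) \<le> \<bar>cf n\<bar> * real CARD('n)" if "X \<in> {X. contr X}" for n and X :: "real^'n^'n"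
      using mpow_norm[of X n] that by (auto intro!: mult_left_mono)
    show "summable (\<lambda>n. \<bar>cf n\<bar> * real CARD('n))" by (intro summable_mult2 summable_cf)
  qed
  have cp: "continuous_on UNIV (\<lambda>X::real^'n^'n. mpow X i)" for i
  proof (induction i)
    case 0 then show ?case by simp
  next
    case (Suc i)
    then show ?case
      by (simp add: bounded_bilinear.continuous_on[OF bb_mm] continuous_on_id)
  qed
  have "continuous_on {X::real^'n^'n. contr X} (\<lambda>X. \<Sum>i. cf i *\<^sub>R mpow X i)"
  proof (rule uniform_limit_theorem[OF _ ul])
    show "\<forall>\<^sub>F n in sequentially. continuous_on {X::real^'n^'n. contr X} (\<lambda>X. \<Sum>i<n. cf i *\<^sub>R mpow X i)"
      by (intro always_eventually allI continuous_intros continuous_on_subset[OF cp]) auto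
  qed simp
  then show ?thesis unfolding FF_def[abs_def] .
qed

lemma sym_sq_inner: "transpose B = B \<Longrightarrow> (B *v x) \<bullet> (B *v x) = x \<bullet> (((B::real^'n^'n) ** B) *v x)"
  by (simp add: sym_inner matrix_vector_mul_assoc[symmetric])

lemma sym_quad_zero:
  fixes P :: "real^'n^'n"
  assumes s: "transpose P = P" and z: "\<And>x. x \<bullet> (P *v x) = 0"
  shows "P = 0"
proof -
  have "y \<bullet> (P *v x) = 0" for x y
  proof -
    have "(x + y) \<bullet> (P *v (x + y)) = x \<bullet> (P *v x) + x \<bullet> (P *v y) + y \<bullet> (P *v x) + y \<bullet> (P *v y)"
      by (simp add: matrix_vector_right_distrib inner_add_left inner_add_right)
    moreover have "x \<bullet> (P *v y) = y \<bullet> (P *v x)" using sym_inner[OF s, of x y] by (simp add: inner_commute)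
    ultimately show ?thesis using z[of "x+y"] z[of x] z[of y] by simp
  qed
  then have "P *v x = 0 *v x" for x using inner_eq_zero_iff[of "P *v x"] by simp
  then show ?thesis by (rule matrix_eq[THEN iffD2, rule_format])
qed

lemma sym_cube_zero:
  fixes D :: "real^'n^'n"
  assumes s: "transpose D = D" and z: "D ** D ** D = 0"
  shows "D = 0"
proof -
  have s2: "transpose (D ** D) = D ** D" by (simp add: matrix_transpose_mul s)
  have z4: "(D ** D) ** (D ** D) = 0" using z by (simp add: matrix_mul_assoc)
  have "(D ** D) *v x = 0" for x
    using sym_sq_inner[OF s2, of x] z4 by simp
  then have d2: "D ** D = 0" using matrix_eq[of "D ** D" 0] by simp
  have "D *v x = 0" for x using sym_sq_inner[OF s, of x] d2 by simp
  then show ?thesis using matrix_eq[of D 0] by simp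
qed

lemma transpose_diff: "transpose ((A::real^'a^'b) - B) = transpose A - transpose B"
  by (simp add: transpose_def vec_eq_iff)

lemma mm_diff_left: "((A::real^'k^'m) - B) ** (C::real^'n^'k) = A ** C - B ** C"
  using bounded_bilinear.diff_left[OF bb_mm] by blast
lemma mm_diff_right: "(C::real^'k^'m) ** ((A::real^'n^'k) - B) = C ** A - C ** B"
  using bounded_bilinear.diff_right[OF bb_mm] by blast
lemma mm_add_left: "((A::real^'k^'m) + B) ** (C::real^'n^'k) = A ** C + B ** C"
  using bounded_bilinear.add_left[OF bb_mm] by blast

lemma quad_sandwich: "transpose D = D \<Longrightarrow> x \<bullet> ((D ** S ** D) *v x) = (D *v x) \<bullet> ((S::real^'n^'n) *v (D *v x))"
  by (simp add: matrix_vector_mul_assoc[symmetric] sym_inner)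

lemma psd_unique_comm:
  fixes S T :: "real^'n^'n"
  assumes S: "psd S" and T: "psd T" and c: "S ** T = T ** S" and e: "S ** S = T ** T"
  shows "S = T"
proof -
  define D where "D = S - T"
  have sS: "transpose S = S" and sT: "transpose T = T" using S T by (auto simp: psd_def)
  have sD: "transpose D = D" unfolding D_def transpose_diff sS sT ..
  have z1: "(S + T) ** D = 0"
    unfolding D_def mm_diff_right mm_add_left using c e by simp
  have z2: "D ** S ** D + D ** T ** D = 0"
  proof -
    have "D ** S ** D + D ** T ** D = D ** (S ** D) + D ** (T ** D)" by (simp add: matrix_mul_assoc)
    also have "\<dots> = D ** ((S + T) ** D)" by (simp add: mm_add_left matrix_add_ldistrib)
    finally show ?thesis using z1 by simp
  qed
  have q1: "0 \<le> x \<bullet> ((D ** S ** D) *v x)" for x using S sD by (simp add: quad_sandwich psd_def)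
  have q2: "0 \<le> x \<bullet> ((D ** T ** D) *v x)" for x using T sD by (simp add: quad_sandwich psd_def)
  have qs: "x \<bullet> ((D ** S ** D) *v x) + x \<bullet> ((D ** T ** D) *v x) = 0" for x
    using arg_cong[OF z2, of "\<lambda>M. x \<bullet> (M *v x)"] by (simp add: matrix_vector_mult_add_rdistrib inner_add_right)
  have ts: "transpose (D ** M ** D) = D ** M ** D" if "transpose M = M" for M
    using that sD by (simp add: matrix_transpose_mul matrix_mul_assoc)
  have p1: "D ** S ** D = 0"
    by (rule sym_quad_zero[OF ts[OF sS]]) (use q1 q2 qs in \<open>smt (verit)\<close>)
  have p2: "D ** T ** D = 0"
    by (rule sym_quad_zero[OF ts[OF sT]]) (use q1 q2 qs in \<open>smt (verit)\<close>)
  have dd: "D ** D = D ** S - D ** T"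
  proof -
    have "D ** (S - T) = D ** S - D ** T" by (rule mm_diff_right)
    then show ?thesis unfolding D_def[symmetric] .
  qed
  have "D ** D ** D = D ** S ** D - D ** T ** D"
    unfolding dd by (rule mm_diff_left)
  then have "D ** D ** D = 0" using p1 p2 by simp
  then have "D = 0" by (rule sym_cube_zero[OF sD])
  then show ?thesis by (simp add: D_def)
qed

lemma smv: "(k *\<^sub>R (A::real^'a^'b)) *v x = k *\<^sub>R (A *v x)"
  by (rule bounded_bilinear.scaleR_left[OF bb_mv])

lemma contr_of_form:
  fixes Y :: "real^'n^'n"
  assumes s: "transpose Y = Y" and lo: "\<And>x. 0 \<le> x \<bullet> (Y *v x)" and hi: "\<And>x. x \<bullet> (Y *v x) \<le> (norm x)^2"
  shows "contr Y"
  unfolding contr_def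
proof
  fix x :: "real^'n"
  define u where "u = Y *v x"
  show "norm (Y *v x) \<le> norm x"
  proof (cases "u = 0")
    case True then show ?thesis by (simp add: u_def)
  next
    case False
    then have nu: "norm u > 0" by simp
    define y where "y = (norm x / norm u) *\<^sub>R u"
    have ny: "norm y = norm x" using nu by (simp add: y_def)
    have xy: "x \<bullet> (Y *v y) = y \<bullet> (Y *v x)" using sym_inner[OF s, of x y] by (simp add: inner_commute)
    have p: "(x + y) \<bullet> (Y *v (x + y)) = x \<bullet> (Y *v x) + x \<bullet> (Y *v y) + y \<bullet> (Y *v x) + y \<bullet> (Y *v y)"
      by (simp add: matrix_vector_right_distrib inner_add_left inner_add_right)
    have m: "(x - y) \<bullet> (Y *v (x - y)) = x \<bullet> (Y *v x) - x \<bullet> (Y *v y) - y \<bullet> (Y *v x) + y \<bullet> (Y *v y)"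
      by (simp add: matrix_vector_mult_diff_distrib inner_diff_left inner_diff_right)
    have "(x + y) \<bullet> (Y *v (x + y)) \<le> (norm (x + y))^2" by (rule hi)
    also have "\<dots> \<le> (norm x + norm y)^2" by (intro power_mono norm_triangle_ineq) auto
    also have "\<dots> = 4 * (norm x)^2" using ny by (simp add: power2_eq_square)
    finally have "4 * (y \<bullet> (Y *v x)) \<le> 4 * (norm x)^2"
      using lo[of "x - y"] p m xy by linarith
    moreover have "y \<bullet> (Y *v x) = norm x * norm u"
      using nu by (simp add: y_def u_def[symmetric] power2_norm_eq_inner[symmetric] power2_eq_square)
    ultimately have "norm x * norm u \<le> norm x * norm x" by (simp add: power2_eq_square)
    moreover have "norm x > 0"
    proof (rule ccontr)
      assume "\<not> norm x > 0"
      then have "x = 0" by simp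
      then show False using False by (simp add: u_def)
    qed
    ultimately show ?thesis by (simp add: u_def)
  qed
qed

definition Ymat :: "real \<Rightarrow> real^'n^'n \<Rightarrow> real^'n^'n" where
  "Ymat c Q = mat 1 - (1/c) *\<^sub>R Q"

lemma Ymat_props:
  fixes Q :: "real^'n^'n"
  assumes Q: "psd Q" and c: "0 < c" and oc: "op_norm Q \<le> c"
  shows "contr (Ymat c Q)" "transpose (Ymat c Q) = Ymat c Q"
proof -
  have sQ: "transpose Q = Q" using Q by (simp add: psd_def)
  show sY: "transpose (Ymat c Q) = Ymat c Q"
    unfolding Ymat_def transpose_diff transpose_scalar sQ by simp
  have f: "x \<bullet> (Ymat c Q *v x) = (norm x)^2 - (x \<bullet> (Q *v x)) / c" for x
    by (simp add: Ymat_def matrix_vector_mult_diff_rdistrib smv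
        inner_diff_right power2_norm_eq_inner)
  have q0: "0 \<le> x \<bullet> (Q *v x)" for x using Q by (simp add: psd_def)
  have q1: "x \<bullet> (Q *v x) \<le> c * (norm x)^2" for x
  proof -
    have "x \<bullet> (Q *v x) \<le> norm x * norm (Q *v x)" by (rule norm_cauchy_schwarz)
    also have "\<dots> \<le> norm x * (op_norm Q * norm x)" by (intro mult_left_mono op_bound) auto
    also have "\<dots> \<le> norm x * (c * norm x)" by (intro mult_left_mono mult_right_mono oc) auto
    finally show ?thesis by (simp add: power2_eq_square mult_ac)
  qed
  show "contr (Ymat c Q)"
  proof (rule contr_of_form[OF sY])
    fix x
    show "0 \<le> x \<bullet> (Ymat c Q *v x)" unfolding f using q1[of x] c by (simp add: field_simps)
    show "x \<bullet> (Ymat c Q *v x) \<le> (norm x)^2" unfolding f using q0[of x] c by simp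
  qed
qed

lemma sqrt_constr:
  fixes Q :: "real^'n^'n"
  assumes Q: "psd Q" and c: "0 < c" and oc: "op_norm Q \<le> c"
  shows "psd (sqrt c *\<^sub>R FF (Ymat c Q))" "(sqrt c *\<^sub>R FF (Ymat c Q)) ** (sqrt c *\<^sub>R FF (Ymat c Q)) = Q"
proof -
  note Y = Ymat_props[OF Q c oc]
  have "(sqrt c *\<^sub>R FF (Ymat c Q)) ** (sqrt c *\<^sub>R FF (Ymat c Q)) = (sqrt c * sqrt c) *\<^sub>R (FF (Ymat c Q) ** FF (Ymat c Q))"
    by (simp add: matrix_scalar_ac scalar_matrix_assoc[symmetric])
  also have "\<dots> = c *\<^sub>R (mat 1 - Ymat c Q)" using c by (simp add: FF_sq[OF Y(1)])
  also have "\<dots> = Q" using c by (simp add: Ymat_def)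
  finally show "(sqrt c *\<^sub>R FF (Ymat c Q)) ** (sqrt c *\<^sub>R FF (Ymat c Q)) = Q" .
  show "psd (sqrt c *\<^sub>R FF (Ymat c Q))"
    unfolding psd_def
    using FF_sym[OF Y] FF_quad[OF Y(1)] c
    by (simp add: transpose_scalar smv)
qed

lemma psd_sqrt_eq:
  fixes Q :: "real^'n^'n"
  assumes Q: "psd Q" and c: "0 < c" and oc: "op_norm Q \<le> c"
  shows "psd_sqrt Q = sqrt c *\<^sub>R FF (Ymat c Q)"
  unfolding psd_sqrt_def
proof (rule the_equality)
  let ?S0 = "sqrt c *\<^sub>R FF (Ymat c Q)"
  note Y = Ymat_props[OF Q c oc]
  show "psd ?S0 \<and> ?S0 ** ?S0 = Q" using sqrt_constr[OF Q c oc] by blast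
  fix S assume S: "psd S \<and> S ** S = Q"
  have SQ: "S ** Q = Q ** S" using S by (metis matrix_mul_assoc)
  have SY: "S ** Ymat c Q = Ymat c Q ** S"
    unfolding Ymat_def mm_diff_right mm_diff_left
    by (simp add: matrix_scalar_ac scalar_matrix_assoc[symmetric] SQ)
  have "S ** ?S0 = ?S0 ** S"
    using FF_comm[OF Y(1) SY] by (simp add: matrix_scalar_ac scalar_matrix_assoc[symmetric])
  then show "S = ?S0"
    using psd_unique_comm[of S ?S0] S sqrt_constr[OF Q c oc] by simp
qed

lemma psd_sqrt_props:
  fixes Q :: "real^'n^'n"
  assumes Q: "psd Q"
  shows "psd (psd_sqrt Q)" "psd_sqrt Q ** psd_sqrt Q = Q"
proof -
  have c: "0 < op_norm Q + 1" using op_nonneg[of Q] by linarith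
  show "psd (psd_sqrt Q)" "psd_sqrt Q ** psd_sqrt Q = Q"
    using psd_sqrt_eq[OF Q c] sqrt_constr[OF Q c] by auto
qed

lemma sqrt_bound:
  fixes Q :: "real^'n^'n"
  assumes Q: "psd Q"
  shows "(norm (psd_sqrt Q *v z))^2 \<le> op_norm Q * (norm z)^2"
proof -
  note P = psd_sqrt_props[OF Q]
  have "(norm (psd_sqrt Q *v z))^2 = z \<bullet> (Q *v z)"
    using sym_sq_inner[of "psd_sqrt Q" z] P by (simp add: psd_def power2_norm_eq_inner)
  also have "\<dots> \<le> norm z * norm (Q *v z)" by (rule norm_cauchy_schwarz)
  also have "\<dots> \<le> norm z * (op_norm Q * norm z)" by (intro mult_left_mono op_bound) auto
  finally show ?thesis by (simp add: power2_eq_square mult_ac)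
qed

lemma sqrt_cont:
  fixes Q1 :: "real^'n^'n"
  assumes Q1: "psd Q1" and Qn: "\<And>n. psd (Qn n)" and lim: "Qn \<longlonglongrightarrow> Q1"
  shows "(\<lambda>n. psd_sqrt (Qn n)) \<longlonglongrightarrow> psd_sqrt Q1"
proof -
  define c where "c = op_norm Q1 + 1"
  have c: "0 < c" using op_nonneg[of Q1] by (simp add: c_def)
  have "(\<lambda>n. norm (Qn n - Q1)) \<longlonglongrightarrow> 0" using lim by (simp add: tendsto_norm_zero_iff LIM_zero)
  then have "eventually (\<lambda>n. norm (Qn n - Q1) < 1) sequentially"
    by (rule order_tendstoD) simp
  then have ev: "eventually (\<lambda>n. op_norm (Qn n) \<le> c) sequentially"
  proof eventually_elim
    case (elim n)
    then show ?case using op_le_diff[of "Qn n" Q1] c_def by linarith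
  qed
  have lY: "(\<lambda>n. Ymat c (Qn n)) \<longlonglongrightarrow> Ymat c Q1"
    unfolding Ymat_def by (intro tendsto_intros lim)
  have "(\<lambda>n. FF (Ymat c (Qn n))) \<longlonglongrightarrow> FF (Ymat c Q1)"
  proof (rule continuous_on_tendsto_compose[OF FF_cont lY])
    show "Ymat c Q1 \<in> {X. contr X}" using Ymat_props[OF Q1 c] c_def by simp
    show "\<forall>\<^sub>F n in sequentially. Ymat c (Qn n) \<in> {X. contr X}"
      using ev by eventually_elim (use Ymat_props[OF Qn c] in simp)
  qed
  then have "(\<lambda>n. sqrt c *\<^sub>R FF (Ymat c (Qn n))) \<longlonglongrightarrow> sqrt c *\<^sub>R FF (Ymat c Q1)"
    by (intro tendsto_intros)
  moreover have "eventually (\<lambda>n. sqrt c *\<^sub>R FF (Ymat c (Qn n)) = psd_sqrt (Qn n)) sequentially"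
    using ev by eventually_elim (simp add: psd_sqrt_eq[OF Qn c])
  moreover have "psd_sqrt Q1 = sqrt c *\<^sub>R FF (Ymat c Q1)"
    using psd_sqrt_eq[OF Q1 c] c_def by simp
  ultimately show ?thesis using Lim_transform_eventually by fastforce
qed

lemma gauss1_fin:
  assumes b: "0 < (\<beta>::real)"
  shows "(\<integral>\<^sup>+ t. ennreal (exp (- \<beta> * t^2)) \<partial>lborel) < \<infinity>"
proof -
  define \<sigma> where "\<sigma> = 1 / sqrt (2 * \<beta>)"
  have s: "\<sigma> > 0" using b by (simp add: \<sigma>_def)
  have s2: "2 * \<sigma>^2 = 1 / \<beta>" using b by (simp add: \<sigma>_def power_divide)
  define K where "K = sqrt (2 * pi * \<sigma>^2)"
  have K: "K > 0" using s by (simp add: K_def)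
  have eq: "exp (- \<beta> * t^2) = K * normal_density 0 \<sigma> t" for t
  proof -
    have e1: "t^2 / (2 * \<sigma>^2) = \<beta> * t^2" unfolding s2 by simp
    have "normal_density 0 \<sigma> t = (1 / K) * exp (- \<beta> * t^2)"
      unfolding normal_density_def K_def[symmetric] using e1 by simp
    then show ?thesis using K by simp
  qed
  have "(\<integral>\<^sup>+ t. ennreal (exp (- \<beta> * t^2)) \<partial>lborel) = (\<integral>\<^sup>+ t. K * ennreal (normal_density 0 \<sigma> t) \<partial>lborel)"
  proof (intro nn_integral_cong)
    fix t show "ennreal (exp (- \<beta> * t^2)) = K * ennreal (normal_density 0 \<sigma> t)"
      unfolding eq using K by (simp add: ennreal_mult)
  qed
  also have "\<dots> = K * (\<integral>\<^sup>+ t. ennreal (normal_density 0 \<sigma> t) \<partial>lborel)"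
    by (rule nn_integral_cmult) simp
  also have "\<dots> < \<infinity>"
  proof -
    have "(\<integral>\<^sup>+ t. ennreal (norm (normal_density 0 \<sigma> t)) \<partial>lborel) < \<infinity>"
      using integrable_normal_density[where \<mu>=0 and \<sigma>=\<sigma>, OF s] unfolding integrable_iff_bounded by blast
    then have "(\<integral>\<^sup>+ t. ennreal (normal_density 0 \<sigma> t) \<partial>lborel) < \<infinity>" by simp
    then show ?thesis by (simp add: ennreal_mult_less_top)
  qed
  finally show ?thesis .
qed

lemma gauss_fin:
  assumes b: "0 < (\<beta>::real)"
  shows "(\<integral>\<^sup>+ z. ennreal (exp (- \<beta> * (norm (z::real^'n))^2)) \<partial>lborel) < \<infinity>"
proof -
  have e: "ennreal (exp (- \<beta> * (norm z)^2)) = (\<Prod>b\<in>Basis. ennreal (exp (- \<beta> * (z \<bullet> b)^2)))" for z :: "real^'n"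
  proof -
    have "z \<bullet> z = (\<Sum>b\<in>Basis. (z \<bullet> b) * (z \<bullet> b))" by (rule euclidean_inner)
    then have "(norm z)^2 = (\<Sum>b\<in>Basis. (z \<bullet> b)^2)"
      using power2_norm_eq_inner[of z] by (simp add: power2_eq_square)
    then have "exp (- \<beta> * (norm z)^2) = (\<Prod>b\<in>Basis. exp (- \<beta> * (z \<bullet> b)^2))"
      by (simp add: sum_distrib_left exp_sum)
    then show ?thesis by (simp add: prod_ennreal)
  qed
  have "(\<integral>\<^sup>+ z. ennreal (exp (- \<beta> * (norm (z::real^'n))^2)) \<partial>lborel)
      = (\<Prod>b\<in>(Basis::(real^'n) set). (\<integral>\<^sup>+ t. ennreal (exp (- \<beta> * t^2)) \<partial>lborel))"
    unfolding e by (rule nn_integral_lborel_prod) auto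
  also have "\<dots> < \<infinity>"
    using gauss1_fin[OF b] by (simp add: power_less_top_ennreal)
  finally show ?thesis .
qed

definition gdens :: "real^'n \<Rightarrow> real" where
  "gdens z = (2 * pi) powr (- real CARD('n) / 2) * exp (- (norm z)\<^sup>2 / 2)"

lemma std_gauss_eq: "std_gauss = density lborel (\<lambda>z. ennreal (gdens z))"
  by (simp add: std_gauss_def gdens_def)

lemma gdens_pos: "0 < gdens z" by (simp add: gdens_def)

lemma sets_std_gauss[measurable_cong, simp]: "sets std_gauss = sets borel"
  by (simp add: std_gauss_def)

lemma space_std_gauss[simp]: "space std_gauss = UNIV"
  by (simp add: std_gauss_def)

lemma nn_std_gauss:
  assumes [measurable]: "f \<in> borel_measurable borel"
  shows "(\<integral>\<^sup>+ z. f z \<partial>std_gauss) = (\<integral>\<^sup>+ z. ennreal (gdens z) * f z \<partial>lborel)"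
  unfolding std_gauss_eq by (rule nn_integral_density) (auto simp: gdens_def)

lemma gauss_exp_fin:
  assumes a: "a < 1/2"
  shows "(\<integral>\<^sup>+ z. ennreal (exp (a * (norm (z::real^'n))^2)) \<partial>std_gauss) < \<infinity>"
proof -
  define C where "C = (2 * pi) powr (- real CARD('n) / 2)"
  have C: "C > 0" by (simp add: C_def)
  have e: "ennreal (gdens z) * ennreal (exp (a * (norm z)^2)) = C * ennreal (exp (- (1/2 - a) * (norm z)^2))" for z :: "real^'n"
  proof -
    have "gdens z * exp (a * (norm z)^2) = C * exp (- (1/2 - a) * (norm z)^2)"
      by (simp add: gdens_def C_def mult.assoc exp_add[symmetric] algebra_simps)
    then show ?thesis using C by (simp add: ennreal_mult[symmetric] gdens_pos less_imp_le)
  qed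
  have "(\<integral>\<^sup>+ z. ennreal (exp (a * (norm (z::real^'n))^2)) \<partial>std_gauss)
     = (\<integral>\<^sup>+ z. C * ennreal (exp (- (1/2 - a) * (norm (z::real^'n))^2)) \<partial>lborel)"
    by (subst nn_std_gauss) (auto simp: e)
  also have "\<dots> = C * (\<integral>\<^sup>+ z. ennreal (exp (- (1/2 - a) * (norm (z::real^'n))^2)) \<partial>lborel)"
    by (rule nn_integral_cmult) simp
  also have "\<dots> < \<infinity>" using gauss_fin[where \<beta>="1/2 - a" and 'n='n] a by (simp add: ennreal_mult_less_top)
  finally show ?thesis .
qed

lemma std_gauss_finite: "finite_measure (std_gauss :: (real^'n) measure)"
proof (rule finite_measureI)
  have "emeasure (std_gauss :: (real^'n) measure) (space std_gauss) = (\<integral>\<^sup>+ z. ennreal (exp (0 * (norm (z::real^'n))^2)) \<partial>std_gauss)"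
    by (simp add: nn_integral_const)
  also have "\<dots> < \<infinity>" by (rule gauss_exp_fin) simp
  finally show "emeasure (std_gauss :: (real^'n) measure) (space std_gauss) \<noteq> \<infinity>" by (simp add: less_top)
qed

lemma nn_std_gauss_pos:
  assumes [measurable]: "f \<in> borel_measurable borel" and pos: "\<And>z. 0 < f z"
  shows "0 < (\<integral>\<^sup>+ z. ennreal (f z) \<partial>(std_gauss :: (real^'n) measure))"
proof (rule ccontr)
  assume "\<not> ?thesis"
  then have "(\<integral>\<^sup>+ z. ennreal (gdens z) * ennreal (f z) \<partial>(lborel :: (real^'n) measure)) = 0"
    by (simp add: nn_std_gauss)
  then have "AE z in (lborel :: (real^'n) measure). ennreal (gdens z) * ennreal (f z) = 0"
    by (subst (asm) nn_integral_0_iff_AE) (auto simp: gdens_def)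
  moreover have "ennreal (gdens z) * ennreal (f z) \<noteq> 0" for z :: "real^'n"
  proof -
    have "0 < gdens z * f z" using gdens_pos[of z] pos[of z] by simp
    then show ?thesis using gdens_pos[of z] pos[of z] by (simp add: ennreal_mult[symmetric] less_imp_le)
  qed
  ultimately have "AE z in (lborel :: (real^'n) measure). False"
    by (auto elim: AE_mp intro: AE_I2)
  then obtain N where N: "{x \<in> space lborel. \<not> False} \<subseteq> N" "emeasure (lborel :: (real^'n) measure) N = 0" "N \<in> sets lborel"
    by (rule AE_E)
  then have "N = UNIV" by auto
  then show False using N by simp
qed

lemma dconv:
  fixes u :: "nat \<Rightarrow> 'a \<Rightarrow> real"
  assumes [measurable]: "\<And>n. u n \<in> borel_measurable M" "f \<in> borel_measurable M" "w \<in> borel_measurable M"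
    and ev: "eventually (\<lambda>n. \<forall>x\<in>space M. u n x \<le> w x) sequentially"
    and wf: "(\<integral>\<^sup>+x. ennreal (w x) \<partial>M) < \<infinity>"
    and lim: "\<And>x. x \<in> space M \<Longrightarrow> (\<lambda>n. u n x) \<longlonglongrightarrow> f x"
  shows "(\<lambda>n. \<integral>\<^sup>+x. ennreal (u n x) \<partial>M) \<longlonglongrightarrow> (\<integral>\<^sup>+x. ennreal (f x) \<partial>M)"
proof -
  obtain N where N: "\<And>n. n \<ge> N \<Longrightarrow> \<forall>x\<in>space M. u n x \<le> w x"
    using ev by (auto simp: eventually_sequentially)
  have "(\<lambda>n. \<integral>\<^sup>+x. ennreal (u (n + N) x) \<partial>M) \<longlonglongrightarrow> (\<integral>\<^sup>+x. ennreal (f x) \<partial>M)"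
  proof (rule nn_integral_dominated_convergence[where w="\<lambda>x. ennreal (w x)"])
    show "\<And>i. (\<lambda>x. ennreal (u (i + N) x)) \<in> borel_measurable M" by measurable
    show "(\<lambda>x. ennreal (f x)) \<in> borel_measurable M" by measurable
    show "(\<lambda>x. ennreal (w x)) \<in> borel_measurable M" by measurable
    show "AE x in M. ennreal (u (j + N) x) \<le> ennreal (w x)" for j
      using N[of "j + N"] by (intro AE_I2 ennreal_leI) auto
    show "(\<integral>\<^sup>+x. ennreal (w x) \<partial>M) < \<infinity>" by (rule wf)
    show "AE x in M. (\<lambda>i. ennreal (u (i + N) x)) \<longlonglongrightarrow> ennreal (f x)"
      using lim by (intro AE_I2 tendsto_ennrealI LIMSEQ_ignore_initial_segment) auto
  qed
  then show ?thesis by (rule LIMSEQ_offset)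
qed

lemma mgf_eq: "mgfM G Q0 Q1 = (\<integral>\<^sup>+ z. ennreal (exp (Q0 \<bullet> G (psd_sqrt Q1 *v z))) \<partial>std_gauss)"
  by (simp add: mgfM_def trace_inner)

lemma ig_cont:
  fixes S :: "real^'n^'n"
  assumes "continuous_on UNIV (G :: real^'n \<Rightarrow> real^'m^'m)"
  shows "continuous_on UNIV (\<lambda>z. exp (Q0 \<bullet> G (S *v z)))"
proof -
  have "continuous_on UNIV (\<lambda>z::real^'n. S *v z)"
    by (intro linear_continuous_on bounded_linear_intro[where K="norm S"])
       (auto simp: matrix_vector_right_distrib matrix_vector_mult_scaleR, metis mv_bound mult.commute)
  then have "continuous_on UNIV (\<lambda>z. G (S *v z))"
    using continuous_on_compose2[OF assms] by blast
  then show ?thesis by (intro continuous_intros)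
qed

lemma ig_meas:
  fixes S :: "real^'n^'n"
  assumes "continuous_on UNIV (G :: real^'n \<Rightarrow> real^'m^'m)"
  shows "(\<lambda>z. exp (Q0 \<bullet> G (S *v z))) \<in> borel_measurable std_gauss"
proof -
  have "(\<lambda>z. exp (Q0 \<bullet> G (S *v z))) \<in> borel_measurable borel"
    by (rule borel_measurable_continuous_onI[OF ig_cont[OF assms]])
  then show ?thesis by (subst measurable_cong_sets[OF sets_std_gauss refl])
qed

lemma ig_meas_e:
  fixes S :: "real^'n^'n"
  assumes "continuous_on UNIV (G :: real^'n \<Rightarrow> real^'m^'m)"
  shows "(\<lambda>z. ennreal (exp (Q0 \<bullet> G (S *v z)))) \<in> borel_measurable std_gauss"
  using ig_meas[OF assms] by (rule measurable_compose[OF _ measurable_ennreal])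

lemma cont_meas:
  assumes "continuous_on UNIV (f :: real^'n \<Rightarrow> real)"
  shows "(\<lambda>z. ennreal (f z)) \<in> borel_measurable (std_gauss :: (real^'n) measure)"
proof -
  have "f \<in> borel_measurable std_gauss"
    using borel_measurable_continuous_onI[OF assms] by (subst measurable_cong_sets[OF sets_std_gauss refl])
  then show ?thesis by (rule measurable_compose[OF _ measurable_ennreal])
qed

lemma mgf_convex:
  fixes G :: "real^'n \<Rightarrow> real^'m^'m"
  assumes cG: "continuous_on UNIV G" and t: "0 \<le> t" "t \<le> 1"
  shows "mgfM G ((1 - t) *\<^sub>R A + t *\<^sub>R B) Q1 \<le> ennreal (1 - t) * mgfM G A Q1 + ennreal t * mgfM G B Q1"
proof -
  let ?S = "psd_sqrt Q1"
  have pw: "ennreal (exp (((1 - t) *\<^sub>R A + t *\<^sub>R B) \<bullet> G (?S *v z)))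
      \<le> ennreal (1 - t) * ennreal (exp (A \<bullet> G (?S *v z))) + ennreal t * ennreal (exp (B \<bullet> G (?S *v z)))" for z
  proof -
    have "exp (((1 - t) *\<^sub>R A + t *\<^sub>R B) \<bullet> G (?S *v z)) = exp ((1 - t) *\<^sub>R (A \<bullet> G (?S *v z)) + t *\<^sub>R (B \<bullet> G (?S *v z)))"
      by (simp add: inner_add_left)
    also have "\<dots> \<le> (1 - t) * exp (A \<bullet> G (?S *v z)) + t * exp (B \<bullet> G (?S *v z))"
      by (rule convex_onD[OF exp_convex]) (use t in auto)
    finally show ?thesis using t by (simp add: ennreal_mult[symmetric] ennreal_plus[symmetric] del: ennreal_plus)
  qed
  have "mgfM G ((1 - t) *\<^sub>R A + t *\<^sub>R B) Q1 \<le>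
     (\<integral>\<^sup>+ z. ennreal (1 - t) * ennreal (exp (A \<bullet> G (?S *v z))) + ennreal t * ennreal (exp (B \<bullet> G (?S *v z))) \<partial>std_gauss)"
    unfolding mgf_eq by (intro nn_integral_mono pw)
  also have "\<dots> = ennreal (1 - t) * mgfM G A Q1 + ennreal t * mgfM G B Q1"
    unfolding mgf_eq
    by (subst nn_integral_add)
       (auto intro!: borel_measurable_times_ennreal ig_meas_e[OF cG] simp: nn_integral_cmult ig_meas_e[OF cG])
  finally show ?thesis .
qed

lemma dom_convex:
  fixes G :: "real^'n \<Rightarrow> real^'m^'m"
  assumes cG: "continuous_on UNIV G"
  shows "convex (domD G Q1)"
  unfolding convex_alt
proof (intro ballI allI impI)
  fix A B and t :: real assume A: "A \<in> domD G Q1" and B: "B \<in> domD G Q1" and t: "0 \<le> t \<and> t \<le> 1"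
  have "mgfM G ((1 - t) *\<^sub>R A + t *\<^sub>R B) Q1 \<le> ennreal (1 - t) * mgfM G A Q1 + ennreal t * mgfM G B Q1"
    using mgf_convex[OF cG] t by blast
  also have "\<dots> < \<infinity>" using A B by (simp add: domD_def ennreal_mult_less_top)
  finally show "(1 - t) *\<^sub>R A + t *\<^sub>R B \<in> domD G Q1" by (simp add: domD_def)
qed

lemma partA:
  fixes G :: "real^'n \<Rightarrow> real^'m^'m" and Q1 :: "real^'n^'n"
  assumes cG: "continuous_on UNIV G"
    and A_bound: "\<forall>z. norm (G z) \<le> A * (1 + (norm z)\<^sup>2)"
    and Q1: "psd Q1" and small: "2 * A * op_norm Q1 * norm Q0 < 1"
  shows "Q0 \<in> domD G Q1"
proof -
  let ?S = "psd_sqrt Q1"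
  have "norm (G 0) \<le> A" using A_bound[rule_format, of 0] by simp
  then have A0: "0 \<le> A" using norm_ge_zero[of "G 0"] by linarith
  define a where "a = norm Q0 * A * op_norm Q1"
  have a: "a < 1/2" using small by (simp add: a_def mult_ac)
  have pw: "ennreal (exp (Q0 \<bullet> G (?S *v z))) \<le> ennreal (exp (norm Q0 * A)) * ennreal (exp (a * (norm z)^2))" for z
  proof -
    have "Q0 \<bullet> G (?S *v z) \<le> norm Q0 * norm (G (?S *v z))" by (rule norm_cauchy_schwarz)
    also have "\<dots> \<le> norm Q0 * (A * (1 + (norm (?S *v z))^2))"
      using A_bound by (intro mult_left_mono) auto
    also have "\<dots> \<le> norm Q0 * (A * (1 + op_norm Q1 * (norm z)^2))"
      using sqrt_bound[OF Q1, of z] A0 by (intro mult_left_mono) auto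
    also have "\<dots> = norm Q0 * A + a * (norm z)^2" by (simp add: a_def algebra_simps)
    finally have "exp (Q0 \<bullet> G (?S *v z)) \<le> exp (norm Q0 * A) * exp (a * (norm z)^2)"
      by (simp add: exp_add[symmetric])
    then show ?thesis by (simp add: ennreal_mult[symmetric])
  qed
  have "mgfM G Q0 Q1 \<le> (\<integral>\<^sup>+ z. ennreal (exp (norm Q0 * A)) * ennreal (exp (a * (norm (z::real^'n))^2)) \<partial>std_gauss)"
    unfolding mgf_eq by (rule nn_integral_mono) (rule pw)
  also have "\<dots> = ennreal (exp (norm Q0 * A)) * (\<integral>\<^sup>+ z. ennreal (exp (a * (norm (z::real^'n))^2)) \<partial>std_gauss)"
    by (rule nn_integral_cmult, rule cont_meas) (intro continuous_intros)
  also have "\<dots> < \<infinity>" using gauss_exp_fin[OF a, where 'n='n] by (simp add: ennreal_mult_less_top)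
  finally show ?thesis by (simp add: domD_def)
qed

lemma cont_meas_r:
  assumes "continuous_on UNIV (f :: real^'n \<Rightarrow> real)"
  shows "f \<in> borel_measurable (std_gauss :: (real^'n) measure)"
  using borel_measurable_continuous_onI[OF assms] by (subst measurable_cong_sets[OF sets_std_gauss refl])

lemma partC:
  fixes G :: "real^'n \<Rightarrow> real^'m^'m" and Q1 :: "real^'n^'n"
  assumes cG: "continuous_on UNIV G" and zi: "0 \<in> interior (domD G Q1)" and Q0: "Q0 \<in> domD G Q1"
  shows "\<exists>Q0n :: nat \<Rightarrow> real^'m^'m. \<exists>L.
            (\<forall>n. Q0n n \<in> interior (domD G Q1))
            \<and> (\<lambda>n. ln (enn2real (mgfM G (Q0n n) Q1))) \<longlonglongrightarrow> L
            \<and> L \<le> ln (enn2real (mgfM G Q0 Q1))"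
proof -
  let ?S = "psd_sqrt Q1"
  define t where "t n = 1 - 1 / (real n + 2)" for n
  have t01: "0 \<le> t n" "t n \<le> 1" for n by (auto simp: t_def field_simps)
  have tlim: "t \<longlonglongrightarrow> 1"
  proof -
    have "(\<lambda>n. 1 / (real n + 2)) \<longlonglongrightarrow> 0"
      using LIMSEQ_ignore_initial_segment[OF lim_inverse_n', of 2]
      by (simp add: add.commute)
    then show ?thesis unfolding t_def using tendsto_diff[OF tendsto_const[of 1]] by fastforce
  qed
  define Q0n where "Q0n n = t n *\<^sub>R Q0" for n
  have int: "Q0n n \<in> interior (domD G Q1)" for n
  proof -
    have "Q0 - (1 / (real n + 2)) *\<^sub>R (Q0 - 0) \<in> interior (domD G Q1)"
      by (rule mem_interior_convex_shrink[OF dom_convex[OF cG] zi Q0]) (auto simp: field_simps)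
    moreover have "Q0 - (1 / (real n + 2)) *\<^sub>R (Q0 - 0) = Q0n n"
      by (simp add: Q0n_def t_def algebra_simps)
    ultimately show ?thesis by simp
  qed
  define X where "X z = Q0 \<bullet> G (?S *v z)" for z
  have conv: "(\<lambda>n. mgfM G (Q0n n) Q1) \<longlonglongrightarrow> mgfM G Q0 Q1"
  proof -
    have "(\<lambda>n. \<integral>\<^sup>+z. ennreal (exp ((t n *\<^sub>R Q0) \<bullet> G (?S *v z))) \<partial>std_gauss)
        \<longlonglongrightarrow> (\<integral>\<^sup>+z. ennreal (exp (Q0 \<bullet> G (?S *v z))) \<partial>std_gauss)"
    proof (rule dconv[where w="\<lambda>z. 1 + exp (X z)"])
      show "\<And>n. (\<lambda>z. exp ((t n *\<^sub>R Q0) \<bullet> G (?S *v z))) \<in> borel_measurable std_gauss"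
        by (rule ig_meas[OF cG])
      show "(\<lambda>z. exp (Q0 \<bullet> G (?S *v z))) \<in> borel_measurable std_gauss"
        by (rule ig_meas[OF cG])
      show "(\<lambda>z. 1 + exp (X z)) \<in> borel_measurable std_gauss"
        unfolding X_def by (intro cont_meas_r continuous_intros ig_cont[OF cG])
      show "\<forall>\<^sub>F n in sequentially. \<forall>z\<in>space std_gauss. exp ((t n *\<^sub>R Q0) \<bullet> G (?S *v z)) \<le> 1 + exp (X z)"
      proof (intro always_eventually allI ballI)
        fix n z
        have e: "(t n *\<^sub>R Q0) \<bullet> G (?S *v z) = t n * X z" by (simp add: X_def)
        show "exp ((t n *\<^sub>R Q0) \<bullet> G (?S *v z)) \<le> 1 + exp (X z)"
        proof (cases "X z \<ge> 0")
          case True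
          then have "t n * X z \<le> X z" using t01[of n] by (simp add: mult_left_le_one_le)
          then show ?thesis unfolding e by (smt (verit) exp_gt_zero exp_le_cancel_iff)
        next
          case False
          then have "t n * X z \<le> 0" using t01[of n] by (simp add: mult_nonneg_nonpos)
          then show ?thesis unfolding e by (smt (verit) exp_gt_zero exp_le_one_iff)
        qed
      qed
      show "(\<integral>\<^sup>+z. ennreal (1 + exp (X z)) \<partial>std_gauss) < \<infinity>"
      proof -
        have "(\<integral>\<^sup>+z. ennreal (1 + exp (X z)) \<partial>std_gauss) = (\<integral>\<^sup>+z. 1 + ennreal (exp (X z)) \<partial>std_gauss)"
          by (intro nn_integral_cong) (subst ennreal_plus, auto)
        also have "\<dots> = (\<integral>\<^sup>+(z::real^'n). 1 \<partial>std_gauss) + (\<integral>\<^sup>+z. ennreal (exp (X z)) \<partial>std_gauss)"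
          unfolding X_def by (rule nn_integral_add) (auto intro: ig_meas_e[OF cG] ig_meas[OF cG])
        also have "\<dots> < \<infinity>"
          using Q0 finite_measure.emeasure_finite[OF std_gauss_finite, of "UNIV :: (real^'n) set"]
          by (simp add: domD_def mgf_eq X_def less_top)
        finally show ?thesis .
      qed
      show "(\<lambda>n. exp ((t n *\<^sub>R Q0) \<bullet> G (?S *v z))) \<longlonglongrightarrow> exp (Q0 \<bullet> G (?S *v z))" for z
      proof -
        have "(\<lambda>n. t n * (Q0 \<bullet> G (?S *v z))) \<longlonglongrightarrow> 1 * (Q0 \<bullet> G (?S *v z))"
          by (intro tendsto_intros tlim)
        then show ?thesis unfolding inner_scaleR_left by (intro tendsto_exp) simp
      qed
    qed
    then show ?thesis unfolding mgf_eq Q0n_def .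
  qed
  have fin: "mgfM G Q0 Q1 \<noteq> \<infinity>" using Q0 by (simp add: domD_def)
  have pos: "0 < mgfM G Q0 Q1"
    unfolding mgf_eq
    by (rule nn_std_gauss_pos) (auto intro: borel_measurable_continuous_onI[OF ig_cont[OF cG]])
  have pos': "0 < enn2real (mgfM G Q0 Q1)" using fin pos by (simp add: enn2real_positive_iff less_top)
  have "(\<lambda>n. ln (enn2real (mgfM G (Q0n n) Q1))) \<longlonglongrightarrow> ln (enn2real (mgfM G Q0 Q1))"
  proof (rule tendsto_ln)
    show "(\<lambda>n. enn2real (mgfM G (Q0n n) Q1)) \<longlonglongrightarrow> enn2real (mgfM G Q0 Q1)"
    proof (rule tendsto_enn2real)
      show "(\<lambda>n. mgfM G (Q0n n) Q1) \<longlonglongrightarrow> ennreal (enn2real (mgfM G Q0 Q1))"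
        using conv fin by (simp add: ennreal_enn2real_if)
    qed simp
    show "enn2real (mgfM G Q0 Q1) \<noteq> 0" using pos' by simp
  qed
  then show ?thesis using int by blast
qed

lemma young_exp:
  fixes a b p q :: real
  assumes p: "p > 0" and q: "q > 0" and pq: "1/p + 1/q = 1"
  shows "exp (a + b) \<le> (1/p) * exp (p * a) + (1/q) * exp (q * b)"
proof -
  have h: "1/q = 1 - 1/p" using pq by simp
  have "0 < 1/p" "0 < 1/q" using p q by simp_all
  then have t: "0 \<le> 1/q" "1/q \<le> 1" using h by linarith+
  have "exp ((1 - 1/q) *\<^sub>R (p * a) + (1/q) *\<^sub>R (q * b)) \<le> (1 - 1/q) * exp (p * a) + (1/q) * exp (q * b)"
    by (rule convex_onD[OF exp_convex t]) auto
  moreover have "1 - 1/q = 1/p" using pq by simp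
  moreover have "(1/p) * (p * a) + (1/q) * (q * b) = a + b" using p q by simp
  ultimately show ?thesis by simp
qed

lemma lip_bound:
  fixes G :: "real^'n \<Rightarrow> real^'m^'m" and S T :: "real^'n^'n"
  assumes lipC: "\<forall>z z'. norm (G z - G z') \<le> C * (1 + norm (z - z') * (norm z + norm z')) + \<epsilon> * ((norm z)\<^sup>2 + (norm z')\<^sup>2)"
    and C: "0 < C" and e: "0 < \<epsilon>"
    and nT: "norm T \<le> B" and nS: "norm S \<le> B" and nD: "norm (T - S) \<le> \<rho>"
  shows "norm (G (T *v z) - G (S *v z)) \<le> C + (2 * C * B * \<rho> + 2 * \<epsilon> * B^2) * (norm z)^2"
proof -
  let ?u = "T *v z" and ?v = "S *v z"
  have B0: "0 \<le> B" using nS norm_ge_zero[of S] by linarith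
  have r0: "0 \<le> \<rho>" using nD norm_ge_zero[of "T - S"] by linarith
  have nu: "norm ?u \<le> B * norm z" using mv_bound[of T z] mult_right_mono[OF nT norm_ge_zero[of z]] by linarith
  have nv: "norm ?v \<le> B * norm z" using mv_bound[of S z] mult_right_mono[OF nS norm_ge_zero[of z]] by linarith
  have "?u - ?v = (T - S) *v z" by (simp add: matrix_vector_mult_diff_rdistrib)
  then have nd: "norm (?u - ?v) \<le> \<rho> * norm z" using mv_bound[of "T - S" z] mult_right_mono[OF nD norm_ge_zero[of z]]
    by simp
  have p1: "norm (?u - ?v) * (norm ?u + norm ?v) \<le> (\<rho> * norm z) * (2 * B * norm z)"
    using nd nu nv r0 by (intro mult_mono) auto
  have p2: "(norm ?u)^2 + (norm ?v)^2 \<le> 2 * B^2 * (norm z)^2"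
  proof -
    have "(norm ?u)^2 \<le> (B * norm z)^2" using nu by (intro power_mono) auto
    moreover have "(norm ?v)^2 \<le> (B * norm z)^2" using nv by (intro power_mono) auto
    ultimately show ?thesis by (simp add: power_mult_distrib)
  qed
  have "norm (G ?u - G ?v) \<le> C * (1 + norm (?u - ?v) * (norm ?u + norm ?v)) + \<epsilon> * ((norm ?u)^2 + (norm ?v)^2)"
    using lipC by blast
  also have "\<dots> \<le> C * (1 + (\<rho> * norm z) * (2 * B * norm z)) + \<epsilon> * (2 * B^2 * (norm z)^2)"
    using p1 p2 C e by (intro add_mono mult_left_mono) auto
  also have "\<dots> = C + (2 * C * B * \<rho> + 2 * \<epsilon> * B^2) * (norm z)^2"
    by (simp add: algebra_simps power2_eq_square)
  finally show ?thesis .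
qed

lemma partB:
  fixes G :: "real^'n \<Rightarrow> real^'m^'m" and Q1 :: "real^'n^'n"
  assumes G_lip: "asym_quad_lipschitz G" and Q1: "psd Q1" and Q0: "Q0 \<in> interior (domD G Q1)"
    and Qn: "\<And>n. psd (Qn n)" and lim: "Qn \<longlonglongrightarrow> Q1"
  shows "(\<lambda>n. mgfM G Q0 (Qn n)) \<longlonglongrightarrow> mgfM G Q0 Q1"
proof -
  have cG: "continuous_on UNIV G" using G_lip by (simp add: asym_quad_lipschitz_def)
  obtain e where e: "e > 0" "ball Q0 e \<subseteq> domD G Q1" using Q0 by (auto simp: mem_interior)
  define N0 where "N0 = norm Q0 + 1"
  have N0: "N0 > 0" "norm Q0 \<le> N0" unfolding N0_def using norm_ge_zero[of Q0] by linarith+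
  define \<eta> where "\<eta> = e / (2 * N0)"
  have eta: "\<eta> > 0" using e N0 by (simp add: \<eta>_def)
  have "(1 + \<eta>) *\<^sub>R Q0 \<in> ball Q0 e"
  proof -
    have "dist Q0 ((1 + \<eta>) *\<^sub>R Q0) = \<eta> * norm Q0"
      using eta by (simp add: dist_norm algebra_simps)
    also have "\<dots> \<le> \<eta> * N0" using eta N0 by (intro mult_left_mono) auto
    also have "\<dots> < e" using e N0 by (simp add: \<eta>_def)
    finally show ?thesis by simp
  qed
  then have Qp: "(1 + \<eta>) *\<^sub>R Q0 \<in> domD G Q1" using e by blast
  define p where "p = 1 + \<eta>"
  define q where "q = (1 + \<eta>) / \<eta>"
  have pq: "p > 0" "q > 0" "1/p + 1/q = 1" using eta by (auto simp: p_def q_def field_simps)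
  define \<delta> where "\<delta> = 1 / (4 * q)"
  have d: "\<delta> > 0" "q * \<delta> = 1/4" using pq by (auto simp: \<delta>_def)
  define S where "S = psd_sqrt Q1"
  define Sn where "Sn n = psd_sqrt (Qn n)" for n
  have Slim: "Sn \<longlonglongrightarrow> S" unfolding S_def Sn_def by (rule sqrt_cont[OF Q1 Qn lim])
  define B where "B = norm S + 1"
  have B: "B > 0" "norm S \<le> B" unfolding B_def using norm_ge_zero[of S] by linarith+
  have dlim: "(\<lambda>n. norm (Sn n - S)) \<longlonglongrightarrow> 0"
    using Slim by (simp add: tendsto_norm_zero_iff LIM_zero)
  define \<epsilon> where "\<epsilon> = \<delta> / (4 * B^2 * N0)"
  have eps: "\<epsilon> > 0" using d B N0 by (simp add: \<epsilon>_def)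
  obtain C where C: "C > 0" and lipC: "\<forall>z z'. norm (G z - G z') \<le> C * (1 + norm (z - z') * (norm z + norm z')) + \<epsilon> * ((norm z)\<^sup>2 + (norm z')\<^sup>2)"
    using G_lip eps unfolding asym_quad_lipschitz_def by blast
  define \<rho> where "\<rho> = min 1 (\<delta> / (4 * B * C * N0))"
  have rho: "\<rho> > 0" using d B C N0 by (simp add: \<rho>_def)
  have ev: "eventually (\<lambda>n. norm (Sn n - S) < \<rho>) sequentially"
    using dlim rho by (rule order_tendstoD)
  define K where "K = norm Q0 * C"
  define X where "X z = Q0 \<bullet> G (S *v z)" for z
  define w where "w z = exp K * ((1/p) * exp (((1 + \<eta>) *\<^sub>R Q0) \<bullet> G (S *v z)) + (1/q) * exp ((1/4) * (norm z)^2))" for z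
  have key: "norm Q0 * (2 * C * B * \<rho> + 2 * \<epsilon> * B^2) \<le> \<delta>"
  proof -
    have r: "\<rho> \<le> \<delta> / (4 * B * C * N0)" by (simp add: \<rho>_def)
    have "norm Q0 * (2 * C * B * \<rho>) \<le> N0 * (2 * C * B * (\<delta> / (4 * B * C * N0)))"
      using N0 B C rho r by (intro mult_mono) auto
    also have "\<dots> = \<delta> / 2" using N0 B C by (simp add: field_simps)
    finally have a1: "norm Q0 * (2 * C * B * \<rho>) \<le> \<delta> / 2" .
    have "norm Q0 * (2 * \<epsilon> * B^2) \<le> N0 * (2 * \<epsilon> * B^2)"
      using N0 eps by (intro mult_right_mono) auto
    also have "\<dots> = \<delta> / 2" using N0 B by (simp add: \<epsilon>_def field_simps)
    finally have a2: "norm Q0 * (2 * \<epsilon> * B^2) \<le> \<delta> / 2" .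
    show ?thesis using a1 a2 by (simp add: distrib_left)
  qed
  have bound: "exp (Q0 \<bullet> G (Sn n *v z)) \<le> w z" if hn: "norm (Sn n - S) < \<rho>" for n z
  proof -
    have nT: "norm (Sn n) \<le> B"
    proof -
      have "norm (Sn n) \<le> norm S + norm (Sn n - S)" by (metis norm_triangle_sub add.commute)
      then show ?thesis using hn by (simp add: B_def \<rho>_def)
    qed
    have lb: "norm (G (Sn n *v z) - G (S *v z)) \<le> C + (2 * C * B * \<rho> + 2 * \<epsilon> * B^2) * (norm z)^2"
      by (rule lip_bound[OF lipC C eps nT B(2)]) (use hn in simp)
    have "Q0 \<bullet> G (Sn n *v z) - X z = Q0 \<bullet> (G (Sn n *v z) - G (S *v z))"
      by (simp add: X_def inner_diff_right)
    also have "\<dots> \<le> norm Q0 * norm (G (Sn n *v z) - G (S *v z))" by (rule norm_cauchy_schwarz)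
    also have "\<dots> \<le> norm Q0 * (C + (2 * C * B * \<rho> + 2 * \<epsilon> * B^2) * (norm z)^2)"
      using lb by (intro mult_left_mono) auto
    also have "\<dots> = K + (norm Q0 * (2 * C * B * \<rho> + 2 * \<epsilon> * B^2)) * (norm z)^2"
      by (simp add: K_def algebra_simps)
    also have "\<dots> \<le> K + \<delta> * (norm z)^2"
      using key by (intro add_left_mono mult_right_mono) auto
    finally have le: "Q0 \<bullet> G (Sn n *v z) \<le> K + (X z + \<delta> * (norm z)^2)" by simp
    have "exp (Q0 \<bullet> G (Sn n *v z)) \<le> exp K * exp (X z + \<delta> * (norm z)^2)"
      using le by (simp add: exp_add[symmetric])
    also have "\<dots> \<le> exp K * ((1/p) * exp (p * X z) + (1/q) * exp (q * (\<delta> * (norm z)^2)))"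
      by (intro mult_left_mono young_exp pq) auto
    also have "\<dots> = w z"
    proof -
      have e1: "p * X z = ((1 + \<eta>) *\<^sub>R Q0) \<bullet> G (S *v z)" by (simp add: p_def X_def)
      have e2: "q * (\<delta> * (norm z)^2) = (1/4) * (norm z)^2" using d(2) by (simp add: mult.assoc[symmetric])
      show ?thesis by (simp only: w_def e1 e2)
    qed
    finally show ?thesis .
  qed
  have "(\<lambda>n. \<integral>\<^sup>+z. ennreal (exp (Q0 \<bullet> G (Sn n *v z))) \<partial>std_gauss)
        \<longlonglongrightarrow> (\<integral>\<^sup>+z. ennreal (exp (Q0 \<bullet> G (S *v z))) \<partial>std_gauss)"
  proof (rule dconv[where w=w])
    show "\<And>n. (\<lambda>z. exp (Q0 \<bullet> G (Sn n *v z))) \<in> borel_measurable std_gauss"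
      by (rule ig_meas[OF cG])
    show "(\<lambda>z. exp (Q0 \<bullet> G (S *v z))) \<in> borel_measurable std_gauss"
      by (rule ig_meas[OF cG])
    show "w \<in> borel_measurable std_gauss"
      unfolding w_def[abs_def] by (intro cont_meas_r continuous_intros ig_cont[OF cG])
    show "\<forall>\<^sub>F n in sequentially. \<forall>z\<in>space std_gauss. exp (Q0 \<bullet> G (Sn n *v z)) \<le> w z"
      using ev by eventually_elim (use bound in blast)
    show "(\<integral>\<^sup>+z. ennreal (w z) \<partial>std_gauss) < \<infinity>"
    proof -
      let ?f1 = "\<lambda>z. ennreal (exp (((1 + \<eta>) *\<^sub>R Q0) \<bullet> G (S *v z)))"
      let ?f2 = "\<lambda>z::real^'n. ennreal (exp ((1/4) * (norm z)^2))"
      have "(\<integral>\<^sup>+z. ennreal (w z) \<partial>std_gauss) =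
          (\<integral>\<^sup>+z. ennreal (exp K / p) * ?f1 z + ennreal (exp K / q) * ?f2 z \<partial>std_gauss)"
      proof (intro nn_integral_cong)
        fix z :: "real^'n"
        have wz: "w z = (exp K / p) * exp (((1 + \<eta>) *\<^sub>R Q0) \<bullet> G (S *v z)) + (exp K / q) * exp ((1/4) * (norm z)^2)"
          by (simp add: w_def algebra_simps)
        have 1: "ennreal (exp K / p) * ?f1 z = ennreal ((exp K / p) * exp (((1 + \<eta>) *\<^sub>R Q0) \<bullet> G (S *v z)))"
          using pq by (subst ennreal_mult) auto
        have 2: "ennreal (exp K / q) * ?f2 z = ennreal ((exp K / q) * exp ((1/4) * (norm z)^2))"
          using pq by (subst ennreal_mult) auto
        have 3: "ennreal (w z) = ennreal ((exp K / p) * exp (((1 + \<eta>) *\<^sub>R Q0) \<bullet> G (S *v z))) + ennreal ((exp K / q) * exp ((1/4) * (norm z)^2))"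
          unfolding wz by (rule ennreal_plus) (use pq in auto)
        show "ennreal (w z) = ennreal (exp K / p) * ?f1 z + ennreal (exp K / q) * ?f2 z"
          unfolding 1 2 3 ..
      qed
      also have "\<dots> = ennreal (exp K / p) * (\<integral>\<^sup>+z. ?f1 z \<partial>std_gauss) + ennreal (exp K / q) * (\<integral>\<^sup>+z. ?f2 z \<partial>std_gauss)"
      proof -
        have m1: "?f1 \<in> borel_measurable std_gauss" by (rule ig_meas_e[OF cG])
        have m2: "?f2 \<in> borel_measurable std_gauss" by (intro cont_meas continuous_intros)
        have "(\<integral>\<^sup>+z. ennreal (exp K / p) * ?f1 z + ennreal (exp K / q) * ?f2 z \<partial>std_gauss)
           = (\<integral>\<^sup>+z. ennreal (exp K / p) * ?f1 z \<partial>std_gauss) + (\<integral>\<^sup>+z. ennreal (exp K / q) * ?f2 z \<partial>std_gauss)"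
          by (rule nn_integral_add; intro borel_measurable_times_ennreal borel_measurable_const m1 m2)
        also have "(\<integral>\<^sup>+z. ennreal (exp K / p) * ?f1 z \<partial>std_gauss) = ennreal (exp K / p) * (\<integral>\<^sup>+z. ?f1 z \<partial>std_gauss)"
          by (rule nn_integral_cmult[OF m1])
        also have "(\<integral>\<^sup>+z. ennreal (exp K / q) * ?f2 z \<partial>std_gauss) = ennreal (exp K / q) * (\<integral>\<^sup>+z. ?f2 z \<partial>std_gauss)"
          by (rule nn_integral_cmult[OF m2])
        finally show ?thesis .
      qed
      also have "\<dots> < \<infinity>"
        using Qp gauss_exp_fin[of "1/4", where 'n='n]
        by (simp add: domD_def mgf_eq S_def ennreal_mult_less_top ennreal_mult_eq_top_iff less_top[symmetric])
      finally show ?thesis .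
    qed
    show "(\<lambda>n. exp (Q0 \<bullet> G (Sn n *v z))) \<longlonglongrightarrow> exp (Q0 \<bullet> G (S *v z))" for z
    proof -
      have "(\<lambda>n. Sn n *v z) \<longlonglongrightarrow> S *v z"
        by (rule bounded_bilinear.tendsto[OF bb_mv Slim tendsto_const])
      then have "(\<lambda>n. G (Sn n *v z)) \<longlonglongrightarrow> G (S *v z)"
        by (rule continuous_on_tendsto_compose[OF cG]) auto
      then show ?thesis by (intro tendsto_intros)
    qed
  qed
  then show ?thesis unfolding mgf_eq S_def Sn_def .
qed

theorem mainTheorem14:
  fixes G :: "real^'n \<Rightarrow> real^'m^'m" and A :: real and Q1 :: "real^'n^'n"
  assumes G_psd: "\<forall>z. psd (G z)"
    and G_lip: "asym_quad_lipschitz G"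
    and A_bound: "\<forall>z. norm (G z) \<le> A * (1 + (norm z)\<^sup>2)"
    and Q1_psd: "psd Q1"
  shows "(\<forall>Q0. 2 * A * op_norm Q1 * norm Q0 < 1 \<longrightarrow> Q0 \<in> domD G Q1)
       \<and> 0 \<in> interior (domD G Q1)
       \<and> (\<forall>Q0 Q1n. Q0 \<in> interior (domD G Q1) \<and> (\<forall>n. psd (Q1n n)) \<and> Q1n \<longlonglongrightarrow> Q1
            \<longrightarrow> (\<lambda>n. mgfM G Q0 (Q1n n)) \<longlonglongrightarrow> mgfM G Q0 Q1)
       \<and> (\<forall>Q0 \<in> domD G Q1. \<exists>Q0n :: nat \<Rightarrow> real^'m^'m. \<exists>L.
            (\<forall>n. Q0n n \<in> interior (domD G Q1))
            \<and> (\<lambda>n. ln (enn2real (mgfM G (Q0n n) Q1))) \<longlonglongrightarrow> L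
            \<and> L \<le> ln (enn2real (mgfM G Q0 Q1)))"
proof -
  have cG: "continuous_on UNIV G" using G_lip by (simp add: asym_quad_lipschitz_def)
  have pa: "\<forall>Q0. 2 * A * op_norm Q1 * norm Q0 < 1 \<longrightarrow> Q0 \<in> domD G Q1"
    using partA[OF cG A_bound Q1_psd] by blast
  have "norm (G 0) \<le> A" using A_bound[rule_format, of 0] by simp
  then have A0: "0 \<le> A" using norm_ge_zero[of "G 0"] by linarith
  have zi: "0 \<in> interior (domD G Q1)"
  proof (cases "A * op_norm Q1 = 0")
    case True
    then have "domD G Q1 = UNIV" using pa by (auto simp: mult.assoc)
    then show ?thesis by simp
  next
    case False
    have "0 \<le> A * op_norm Q1" using A0 op_nonneg[of Q1] by simp
    then have pos: "0 < A * op_norm Q1" using False by linarith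
    define r where "r = 1 / (2 * (A * op_norm Q1))"
    have r: "0 < r" using pos by (simp add: r_def)
    have "ball 0 r \<subseteq> domD G Q1"
    proof
      fix Q0 :: "real^'m^'m" assume "Q0 \<in> ball 0 r"
      then have "norm Q0 < r" by simp
      then have "2 * (A * op_norm Q1) * norm Q0 < 2 * (A * op_norm Q1) * r"
        using pos by (intro mult_strict_left_mono) auto
      also have "\<dots> = 1"
      proof -
        have "\<And>c::real. 0 < c \<Longrightarrow> 2 * c * (1 / (2 * c)) = 1" by simp
        then show ?thesis using pos unfolding r_def by blast
      qed
      finally show "Q0 \<in> domD G Q1" using pa by (simp add: mult.assoc)
    qed
    then show ?thesis using r by (auto simp: mem_interior)
  qed
  show ?thesis
    using pa zi partB[OF G_lip Q1_psd] partC[OF cG zi] by blast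
qed

end
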